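(* Let $(X,d)$ be a locally compact noncompact Polish space with compatible metric $d$, $A$ a nonzero C*-algebra, and $Y_n\subseteq X$ ($n\in\mathbb N$) infinite, compact, pairwise disjoint sets such that no compact subset of $X$ meets infinitely many $Y_n$. Let $\phi_n\in\mathrm{Homeo}_\partial(Y_n)$ for each $n$, let $\tilde\psi\in\mathrm{Aut}(Q(X,A))$ be canonically determined by $\{\phi_n\}$, and let $f\in\mathbb N^{\mathbb N}$. If $r(\phi_n)\ge n/f(n)$ for infinitely many $n$, then there is $c\in C_f$ with $\tilde\psi(c)\neq c$.
   Context: For closed $Y\subseteq X$, $\partial_X Y=Y\cap\overline{X\setminus Y}$ and $\mathrm{Homeo}_\partial(Y)$ is the group of homeomorphisms of $Y$ fixing every point of $\partial_XY$. Given $\phi_n\in\mathrm{Homeo}_\partial(Y_n)$ for all $n$, let $\tilde\phi$ be the homeomorphism of $X$ equal to $\phi_n$ on $Y_n$ and to the identity off $\bigcup_n Y_n$; then $\psi(g)=g\circ\tilde\phi$ defines an automorphism of $C_b(X,A)$ preserving $C_0(X,A)$, and the induced automorphism $\tilde\psi$ of $Q(X,A)=C_b(X,A)/C_0(X,A)$ is said to be canonically determined by $\{\phi_n\}$. The radius of $\phi_n$ is $r(\phi_n)=\sup_{x\in Y_n}d(x,\phi_n(x))$. $\mathbb N^{\mathbb N}$ is the set of $f\colon\mathbb N\to\mathbb N$ with all values positive; $\pi\colon C_b(X,A)\to Q(X,A)$ is the quotient map; $D_f=\{g\in C_b(X,A)\mid\forall\epsilon>0\ \exists n_0\ \forall n\ge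 n_0\ \forall x,y\in Y_n\ (d(x,y)<1/f(n)\Rightarrow\|g(x)-g(y)\|<\epsilon)\}$ and $C_f=\pi(D_f)$. *)

theory Defs
  imports "HOL-Analysis.Analysis"
begin

text \<open>The complex structure is given on top of the real Banach algebra structure
by the operator cmul_i (multiplication by the imaginary unit); complex scalar
multiplication by a + b i is then scaleR a x + scaleR b (cmul_i x).\<close>

class cstar_algebra = real_normed_algebra + banach +
  fixes cmul_i :: "'a \<Rightarrow> 'a"
    and cstar :: "'a \<Rightarrow> 'a"
  assumes cmul_i_add: "cmul_i (x + y) = cmul_i x + cmul_i y"
    and cmul_i_scaleR: "cmul_i (scaleR r x) = scaleR r (cmul_i x)"
    and cmul_i_cmul_i: "cmul_i (cmul_i x) = - x"
    and cmul_i_mult_left: "cmul_i (x * y) = cmul_i x * y"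
    and cmul_i_mult_right: "cmul_i (x * y) = x * cmul_i y"
    and norm_complex_scale:
      "norm (scaleR a x + scaleR b (cmul_i x)) = cmod (Complex a b) * norm x"
    and cstar_cstar: "cstar (cstar x) = x"
    and cstar_add: "cstar (x + y) = cstar x + cstar y"
    and cstar_scaleR: "cstar (scaleR r x) = scaleR r (cstar x)"
    and cstar_cmul_i: "cstar (cmul_i x) = - cmul_i (cstar x)"
    and cstar_mult: "cstar (x * y) = cstar y * cstar x"
    and cstar_identity: "norm (cstar x * x) = (norm x)\<^sup>2"

definition Cb :: "('b::topological_space \<Rightarrow> 'a::real_normed_vector) set" where
  "Cb = {g. continuous_on UNIV g \<and> bounded (range g)}"

definition C0 :: "('b::topological_space \<Rightarrow> 'a::real_normed_vector) set" where
  "C0 = {g. continuous_on UNIV g \<and>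
            (\<forall>\<epsilon>>0. \<exists>K. compact K \<and> (\<forall>x. x \<notin> K \<longrightarrow> norm (g x) < \<epsilon>))}"

definition quot_map :: "('b::topological_space \<Rightarrow> 'a::real_normed_vector) \<Rightarrow> ('b \<Rightarrow> 'a) set" where
  "quot_map g = {h \<in> Cb. h - g \<in> C0}"

definition Q :: "('b::topological_space \<Rightarrow> 'a::real_normed_vector) set set" where
  "Q = quot_map ` Cb"

definition boundary_in :: "'b::topological_space set \<Rightarrow> 'b set" where
  "boundary_in Y = Y \<inter> closure (UNIV - Y)"

definition homeo_bd :: "'b::topological_space set \<Rightarrow> ('b \<Rightarrow> 'b) \<Rightarrow> bool" where
  "homeo_bd Y \<phi> \<longleftrightarrow> (\<exists>\<gamma>. homeomorphism Y Y \<phi> \<gamma>) \<and> (\<forall>x \<in> boundary_in Y. \<phi> x = x)"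

definition phi_tilde :: "(nat \<Rightarrow> 'b set) \<Rightarrow> (nat \<Rightarrow> 'b \<Rightarrow> 'b) \<Rightarrow> 'b \<Rightarrow> 'b" where
  "phi_tilde Y \<phi> x = (if \<exists>n. x \<in> Y n then \<phi> (SOME n. x \<in> Y n) x else x)"

definition psi_can :: "(nat \<Rightarrow> 'b set) \<Rightarrow> (nat \<Rightarrow> 'b \<Rightarrow> 'b) \<Rightarrow> ('b \<Rightarrow> 'a) \<Rightarrow> ('b \<Rightarrow> 'a)" where
  "psi_can Y \<phi> g = g \<circ> phi_tilde Y \<phi>"

definition psi_tilde :: "(nat \<Rightarrow> 'b::topological_space set) \<Rightarrow> (nat \<Rightarrow> 'b \<Rightarrow> 'b)
    \<Rightarrow> ('b \<Rightarrow> 'a::real_normed_vector) set \<Rightarrow> ('b \<Rightarrow> 'a) set" where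
  "psi_tilde Y \<phi> c = quot_map (psi_can Y \<phi> (SOME g. g \<in> c))"

definition radius :: "'b::metric_space set \<Rightarrow> ('b \<Rightarrow> 'b) \<Rightarrow> real" where
  "radius Y \<phi> = (SUP x\<in>Y. dist x (\<phi> x))"

definition D_f :: "(nat \<Rightarrow> 'b::metric_space set) \<Rightarrow> (nat \<Rightarrow> nat) \<Rightarrow> ('b \<Rightarrow> 'a::real_normed_vector) set" where
  "D_f Y f = {g \<in> Cb. \<forall>\<epsilon>>0. \<exists>n0. \<forall>n\<ge>n0. \<forall>x\<in>Y n. \<forall>y\<in>Y n.
                 dist x y < 1 / real (f n) \<longrightarrow> norm (g x - g y) < \<epsilon>}"

definition C_f :: "(nat \<Rightarrow> 'b::metric_space set) \<Rightarrow> (nat \<Rightarrow> nat) \<Rightarrow> ('b \<Rightarrow> 'a::real_normed_vector) set set" where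
  "C_f Y f = quot_map ` D_f Y f"

end

theory Submission
  imports Defs
begin

lemma local_iso:
  fixes Y :: "nat \<Rightarrow> 'b::metric_space set"
  assumes lc: "locally_compact_space (euclidean :: 'b topology)"
    and cY: "\<And>n. compact (Y n)"
    and fin: "\<And>K. compact K \<Longrightarrow> finite {n. Y n \<inter> K \<noteq> {}}"
  shows "\<exists>e>0. \<forall>n. ball x e \<inter> Y n \<noteq> {} \<longrightarrow> x \<in> Y n"
proof -
  obtain U K where U: "open U" "compact K" "x \<in> U" "U \<subseteq> K"
  proof -
    have "\<forall>x::'b. \<exists>U. open U \<and> (\<exists>K. compact K \<and> x \<in> U \<and> U \<subseteq> K)"
      using lc by (simp add: locally_compact_space_def)
    thus ?thesis using that by blast
  qed
  define F where "F = (\<Union>n\<in>{n. Y n \<inter> K \<noteq> {} \<and> x \<notin> Y n}. Y n)"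
  have "finite {n. Y n \<inter> K \<noteq> {} \<and> x \<notin> Y n}"
    by (rule finite_subset[OF _ fin[OF U(2)]]) auto
  hence "compact F" unfolding F_def using cY by (intro compact_UN) auto
  hence "closed F" by (rule compact_imp_closed)
  moreover have "x \<notin> F" unfolding F_def by auto
  ultimately obtain e1 where e1: "e1 > 0" "ball x e1 \<subseteq> - F"
    by (metis open_Compl open_contains_ball ComplI)
  obtain e2 where e2: "e2 > 0" "ball x e2 \<subseteq> U"
    using U open_contains_ball by blast
  show ?thesis
  proof (intro exI[of _ "min e1 e2"] conjI allI impI)
    show "min e1 e2 > 0" using e1 e2 by simp
    fix n assume "ball x (min e1 e2) \<inter> Y n \<noteq> {}"
    then obtain y where y: "y \<in> ball x (min e1 e2)" "y \<in> Y n" by blast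
    have "y \<in> K" using y e2 U by auto
    show "x \<in> Y n"
    proof (rule ccontr)
      assume "x \<notin> Y n"
      hence "y \<in> F" unfolding F_def using y \<open>y \<in> K\<close> by blast
      thus False using y e1 by auto
    qed
  qed
qed


lemma max_lip:
  fixes L p q :: real
  assumes "L \<ge> 0"
  shows "\<bar>max 0 (1 - L*p) - max 0 (1 - L*q)\<bar> \<le> L * \<bar>p - q\<bar>"
proof -
  have e: "(1 - L*p) - (1 - L*q) = L * (q - p)" by (simp add: algebra_simps)
  have "\<bar>(1 - L*p) - (1 - L*q)\<bar> = L * \<bar>p - q\<bar>"
    unfolding e using assms by (simp add: abs_mult abs_minus_commute)
  thus ?thesis by linarith
qed

lemma dist_diff_le:
  fixes x y z :: "'b::metric_space"
  shows "\<bar>dist x z - dist y z\<bar> \<le> dist x y"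
  using dist_triangle[of x z y] dist_triangle[of y z x] dist_commute[of x y] by linarith

theorem lemma2p4:
  fixes Y :: "nat \<Rightarrow> 'b::metric_space set"
    and \<phi> :: "nat \<Rightarrow> 'b \<Rightarrow> 'b"
    and f :: "nat \<Rightarrow> nat"
  assumes "locally_compact_space (euclidean :: 'b topology)"
    and "\<not> compact (UNIV :: 'b set)"
    and "completely_metrizable_space (euclidean :: 'b topology)"
    and "separable_space (euclidean :: 'b topology)"
    and "\<exists>a::'a::cstar_algebra. a \<noteq> 0"
    and "\<And>n. infinite (Y n)"
    and "\<And>n. compact (Y n)"
    and "disjoint_family Y"
    and "\<And>K. compact K \<Longrightarrow> finite {n. Y n \<inter> K \<noteq> {}}"
    and "\<And>n. homeo_bd (Y n) (\<phi> n)"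
    and "\<And>n. f n > 0"
    and "infinite {n. radius (Y n) (\<phi> n) \<ge> real n / real (f n)}"
  shows "\<exists>c \<in> (C_f Y f :: ('b \<Rightarrow> 'a) set set). psi_tilde Y \<phi> c \<noteq> c"
proof -
  note lc = assms(1) and cY = assms(7) and disj = assms(8) and fin = assms(9)
    and hb = assms(10) and fpos = assms(11)
  obtain a :: 'a where a: "a \<noteq> 0" using assms(5) by blast
  have na: "norm a > 0" using a by simp
  define S where "S = {n. radius (Y n) (\<phi> n) \<ge> real n / real (f n)} - {0}"
  have Sinf: "infinite S" unfolding S_def using assms(12) by simp
  have Yne: "Y n \<noteq> {}" for n using assms(6)[of n] by auto
  have ex: "\<exists>x. x \<in> Y n \<and> dist x (\<phi> n x) > real n / (2 * real (f n))" if "n \<in> S" for n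
  proof (rule ccontr)
    assume "\<not> ?thesis"
    hence le: "\<And>x. x \<in> Y n \<Longrightarrow> dist x (\<phi> n x) \<le> real n / (2 * real (f n))" by force
    have "radius (Y n) (\<phi> n) \<le> real n / (2 * real (f n))"
      unfolding radius_def by (rule cSUP_least[OF Yne le])
    moreover have "radius (Y n) (\<phi> n) \<ge> real n / real (f n)" and "n \<ge> 1"
      using that unfolding S_def by auto
    moreover have "real n / (2 * real (f n)) < real n / real (f n)"
      using \<open>n \<ge> 1\<close> fpos[of n] by (simp add: divide_strict_left_mono)
    ultimately show False by linarith
  qed
  define xs where "xs n = (SOME x. x \<in> Y n \<and> dist x (\<phi> n x) > real n / (2 * real (f n)))" for n
  have xs: "xs n \<in> Y n \<and> dist (xs n) (\<phi> n (xs n)) > real n / (2 * real (f n))" if "n \<in> S" for n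
    unfolding xs_def by (rule someI_ex[OF ex[OF that]])
  define L where "L n = 2 * real (f n) / real n" for n
  have L0: "L n \<ge> 0" for n unfolding L_def by simp
  define b where "b n x = (if n \<in> S then max 0 (1 - L n * dist x (xs n)) else 0)" for n x
  define C where "C = (\<Union>n. Y n)"
  define u where "u x = b (SOME n. x \<in> Y n) x" for x
  have idx: "(SOME n. x \<in> Y n) = m" if "x \<in> Y m" for x m
  proof -
    have "x \<in> Y (SOME n. x \<in> Y n)" using that by (rule someI)
    thus ?thesis using that disj unfolding disjoint_family_on_def by blast
  qed
  have u_eq: "u x = b m x" if "x \<in> Y m" for x m unfolding u_def idx[OF that] ..
  have b_cont: "continuous_on UNIV (b n)" for n
    unfolding b_def by (cases "n \<in> S") (auto intro!: continuous_intros)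
  have b_rng: "0 \<le> b n x \<and> b n x \<le> 1" for n x
    unfolding b_def using L0[of n] by (auto simp: mult_nonneg_nonneg)
  have closedC: "closed C"
    unfolding closed_def open_contains_ball
  proof
    fix x assume "x \<in> - C"
    obtain e where e: "e > 0" "\<forall>n. ball x e \<inter> Y n \<noteq> {} \<longrightarrow> x \<in> Y n"
      using local_iso[OF lc cY fin] by blast
    have "ball x e \<subseteq> - C" using e(2) \<open>x \<in> - C\<close> unfolding C_def by blast
    thus "\<exists>e>0. ball x e \<subseteq> - C" using e(1) by blast
  qed
  have contu: "continuous_on C u"
    unfolding continuous_on_eq_continuous_within
  proof
    fix x assume "x \<in> C"
    then obtain m where xm: "x \<in> Y m" unfolding C_def by blast
    obtain e where e: "e > 0" "\<forall>n. ball x e \<inter> Y n \<noteq> {} \<longrightarrow> x \<in> Y n"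
      using local_iso[OF lc cY fin] by blast
    have "continuous (at x within C) (b m)"
      using b_cont[of m] by (simp add: continuous_on_eq_continuous_within continuous_at_imp_continuous_within)
    then show "continuous (at x within C) u"
    proof (rule continuous_transform_within[OF _ e(1) \<open>x \<in> C\<close>])
      fix x' assume "x' \<in> C" "dist x' x < e"
      then obtain k where k: "x' \<in> Y k" unfolding C_def by blast
      have "x' \<in> ball x e" using \<open>dist x' x < e\<close> by (simp add: dist_commute)
      hence "x \<in> Y k" using e(2) k by blast
      hence "k = m" using xm disj unfolding disjoint_family_on_def by blast
      thus "b m x' = u x'" using u_eq[OF k] by simp
    qed
  qed
  have nm: "normal_space (euclidean :: 'b topology)"
    by (rule metrizable_imp_normal_space[OF metrizable_space_euclidean])
  have cl: "closedin euclidean C" using closedC closed_closedin by blast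
  have cm: "continuous_map (subtopology euclidean C) euclideanreal u"
    using contu by simp
  have im: "u ` C \<subseteq> {0..1}" using b_rng unfolding u_def by (simp add: image_subset_iff)
  obtain v where v: "continuous_map euclidean euclideanreal v"
      "\<And>x. x \<in> C \<Longrightarrow> v x = u x" "v ` topspace euclidean \<subseteq> {0..1}"
    using Tietze_extension_closed_real_interval[OF nm cl cm im zero_le_one] by blast
  have vY: "v x = b m x" if "x \<in> Y m" for x m
  proof -
    have "x \<in> C" unfolding C_def using that by blast
    thus ?thesis using v(2)[of x] u_eq[OF that] by simp
  qed
  have v01: "0 \<le> v x \<and> v x \<le> 1" for x using v(3) by (auto simp: image_subset_iff)
  have vc: "continuous_on UNIV v" using v(1) by simp
  define g where "g x = v x *\<^sub>R a" for x
  have gCb: "g \<in> Cb"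
    unfolding Cb_def mem_Collect_eq
  proof
    show "continuous_on UNIV g" unfolding g_def by (intro continuous_intros vc)
    show "bounded (range g)" unfolding bounded_iff
    proof (intro exI[of _ "norm a"] ballI)
      fix y assume "y \<in> range g"
      then obtain x where "y = g x" by blast
      thus "norm y \<le> norm a" unfolding g_def using v01[of x]
        by (simp add: mult_left_le_one_le)
    qed
  qed
  have gD: "g \<in> D_f Y f"
    unfolding D_f_def mem_Collect_eq
  proof (intro conjI gCb allI impI)
    fix \<epsilon> :: real assume "\<epsilon> > 0"
    obtain n0 :: nat where n0: "real n0 > 2 * norm a / \<epsilon>" using reals_Archimedean2 by blast
    show "\<exists>n0. \<forall>n\<ge>n0. \<forall>x\<in>Y n. \<forall>y\<in>Y n. dist x y < 1 / real (f n) \<longrightarrow> norm (g x - g y) < \<epsilon>"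
    proof (intro exI[of _ "max n0 1"] allI impI ballI)
      fix n x y assume n: "max n0 1 \<le> n" and x: "x \<in> Y n" and y: "y \<in> Y n"
        and dxy: "dist x y < 1 / real (f n)"
      have "g x - g y = (b n x - b n y) *\<^sub>R a"
        unfolding g_def vY[OF x] vY[OF y] by (simp add: scaleR_diff_left)
      hence ng: "norm (g x - g y) = \<bar>b n x - b n y\<bar> * norm a" by simp
      show "norm (g x - g y) < \<epsilon>"
      proof (cases "n \<in> S")
        case False thus ?thesis using ng \<open>\<epsilon> > 0\<close> unfolding b_def by simp
      next
        case True
        have "\<bar>b n x - b n y\<bar> \<le> L n * \<bar>dist x (xs n) - dist y (xs n)\<bar>"
          unfolding b_def using True max_lip[OF L0] by simp
        also have "\<dots> \<le> L n * dist x y"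
          by (rule mult_left_mono[OF dist_diff_le L0])
        also have "\<dots> \<le> L n * (1 / real (f n))"
          using dxy L0[of n] by (intro mult_left_mono) auto
        also have "\<dots> = 2 / real n" unfolding L_def using fpos[of n] by simp
        finally have bd: "\<bar>b n x - b n y\<bar> \<le> 2 / real n" .
        have "n \<ge> 1" "real n \<ge> real n0" using n by auto
        have "2 * norm a / \<epsilon> < real n" using n0 \<open>real n \<ge> real n0\<close> by linarith
        hence "2 * norm a < \<epsilon> * real n" using \<open>\<epsilon> > 0\<close> by (simp add: field_simps)
        hence "2 / real n * norm a < \<epsilon>" using \<open>n \<ge> 1\<close> by (simp add: field_simps)
        moreover have "\<bar>b n x - b n y\<bar> * norm a \<le> 2 / real n * norm a"
          by (rule mult_right_mono[OF bd norm_ge_zero])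
        ultimately show ?thesis using ng by linarith
      qed
    qed
  qed
  define c where "c = quot_map g"
  have cC: "c \<in> (C_f Y f :: ('b \<Rightarrow> 'a) set set)" unfolding c_def C_f_def using gD by blast
  have zeroC0: "(\<lambda>x::'b. 0 :: 'a) \<in> C0"
    unfolding C0_def by (auto intro: exI[of _ "{}"])
  have gg: "g - g = (\<lambda>x::'b. 0 :: 'a)" by (rule ext) simp
  have gc: "g \<in> quot_map g" unfolding quot_map_def using gCb zeroC0 gg by simp
  show ?thesis
  proof (intro bexI[OF _ cC] notI)
    assume eq: "psi_tilde Y \<phi> c = c"
    define h where "h = (SOME h. h \<in> c)"
    have hc: "h \<in> c" unfolding h_def using gc c_def by (metis someI)
    hence hg: "h - g \<in> C0" unfolding c_def quot_map_def by simp
    define p where "p = phi_tilde Y \<phi>"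
    have "psi_tilde Y \<phi> c = quot_map (h \<circ> p)"
      unfolding psi_tilde_def psi_can_def h_def p_def ..
    hence "g \<in> quot_map (h \<circ> p)" using eq gc c_def by simp
    hence ghp: "g - (h \<circ> p) \<in> C0" unfolding quot_map_def by simp
    define \<epsilon> where "\<epsilon> = norm a / 3"
    have ep: "\<epsilon> > 0" unfolding \<epsilon>_def using na by simp
    obtain K1 where K1: "compact K1" "\<And>x. x \<notin> K1 \<Longrightarrow> norm ((g - (h \<circ> p)) x) < \<epsilon>"
      using ghp ep unfolding C0_def by blast
    obtain K2 where K2: "compact K2" "\<And>x. x \<notin> K2 \<Longrightarrow> norm ((h - g) x) < \<epsilon>"
      using hg ep unfolding C0_def by blast
    have "finite {n. Y n \<inter> (K1 \<union> K2) \<noteq> {}}"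
      using fin K1(1) K2(1) by (simp add: compact_Un)
    hence "infinite (S - {n. Y n \<inter> (K1 \<union> K2) \<noteq> {}})" using Sinf by (rule Diff_infinite_finite)
    then obtain n where nS: "n \<in> S" and nK: "Y n \<inter> (K1 \<union> K2) = {}"
    proof -
      assume r: "\<And>n. \<lbrakk>n \<in> S; Y n \<inter> (K1 \<union> K2) = {}\<rbrakk> \<Longrightarrow> thesis"
      from \<open>infinite (S - {n. Y n \<inter> (K1 \<union> K2) \<noteq> {}})\<close>
      obtain n where "n \<in> S - {n. Y n \<inter> (K1 \<union> K2) \<noteq> {}}"
        using infinite_imp_nonempty by blast
      thus thesis using r by blast
    qed
    define x where "x = xs n"
    have xY: "x \<in> Y n" and dx: "dist x (\<phi> n x) > real n / (2 * real (f n))"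
      using xs[OF nS] unfolding x_def by auto
    have px: "p x = \<phi> n x" unfolding p_def phi_tilde_def using xY idx[OF xY] by auto
    obtain \<gamma> where "homeomorphism (Y n) (Y n) (\<phi> n) \<gamma>" using hb[of n] unfolding homeo_bd_def by blast
    hence "\<phi> n ` Y n = Y n" unfolding homeomorphism_def by blast
    hence pY: "p x \<in> Y n" using px xY by blast
    have "v x = b n x" by (rule vY[OF xY])
    also have "\<dots> = 1" unfolding b_def x_def using nS by simp
    finally have gx: "g x = a" unfolding g_def by simp
    have "n \<ge> 1" using nS unfolding S_def by auto
    have "L n * dist x (\<phi> n x) > L n * (real n / (2 * real (f n)))"
      using dx L_def fpos[of n] \<open>n \<ge> 1\<close> by (intro mult_strict_left_mono) auto
    moreover have "L n * (real n / (2 * real (f n))) = 1"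
      unfolding L_def using fpos[of n] \<open>n \<ge> 1\<close> by simp
    ultimately have "L n * dist x (\<phi> n x) > 1" by linarith
    hence "L n * dist (\<phi> n x) x > 1" by (simp add: dist_commute)
    hence "b n (p x) = 0" unfolding b_def px x_def[symmetric] using nS by simp
    hence gpx: "g (p x) = 0" unfolding g_def vY[OF pY] by simp
    have "x \<notin> K1" "p x \<notin> K2" using xY pY nK by auto
    hence n1: "norm (g x - h (p x)) < \<epsilon>" and n2: "norm (h (p x) - g (p x)) < \<epsilon>"
      using K1(2)[of x] K2(2)[of "p x"] by auto
    have "norm (g x - g (p x)) \<le> norm (g x - h (p x)) + norm (h (p x) - g (p x))"
      using norm_triangle_ineq[of "g x - h (p x)" "h (p x) - g (p x)"] by simp
    hence "norm a < 2 * \<epsilon>" using gx gpx n1 n2 by simp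
    thus False unfolding \<epsilon>_def using na by simp
  qed
qed

end
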